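(* Let $\alpha,L>0$, $\tau_0=\alpha/L$, $A_0=1$, and for $k\ge0$ define $a_k=\frac{\tau_k+\sqrt{\tau_k^2+4\tau_kA_k}}{2}$, $\tau_{k+1}=\tau_k+\alpha a_k/L$, $A_{k+1}=A_k+a_k$. Then for all $k\ge0$: (a) $A_k/L=\tau_k/\alpha$; (b) $a_k^2=\tau_kA_{k+1}=\tau_{k+1}A_k$; (c) $A_k\ge\left(1+\frac{\sqrt\alpha}{2\sqrt L}\right)^{2k}$. *)

theory Defs
  imports Complex_Main
begin

fun tauA :: "real \<Rightarrow> real \<Rightarrow> nat \<Rightarrow> real \<times> real" where
  "tauA \<alpha> L 0 = (\<alpha> / L, 1)"
| "tauA \<alpha> L (Suc k) =
     (let (t, A) = tauA \<alpha> L k;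
          a = (t + sqrt (t^2 + 4 * t * A)) / 2
      in (t + \<alpha> * a / L, A + a))"

definition tau_seq :: "real \<Rightarrow> real \<Rightarrow> nat \<Rightarrow> real" where
  "tau_seq \<alpha> L k = fst (tauA \<alpha> L k)"

definition A_seq :: "real \<Rightarrow> real \<Rightarrow> nat \<Rightarrow> real" where
  "A_seq \<alpha> L k = snd (tauA \<alpha> L k)"

definition a_seq :: "real \<Rightarrow> real \<Rightarrow> nat \<Rightarrow> real" where
  "a_seq \<alpha> L k = (tau_seq \<alpha> L k + sqrt ((tau_seq \<alpha> L k)^2 + 4 * tau_seq \<alpha> L k * A_seq \<alpha> L k)) / 2"

end

theory Submission
  imports Defs
begin

lemma closed:
  fixes \<alpha> L :: real
  assumes "\<alpha> > 0" and "L > 0"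
  defines "q \<equiv> \<alpha> / L"
  defines "c \<equiv> (q + sqrt (q^2 + 4*q)) / 2"
  shows "tauA \<alpha> L k = (q * (1+c)^k, (1+c)^k)"
proof (induction k)
  case 0 then show ?case by (simp add: q_def)
next
  case (Suc k)
  have q: "q > 0" using assms by (simp add: q_def)
  have c: "c \<ge> 0" using q by (simp add: c_def)
  define B where "B = (1+c)^k"
  have B: "B > 0" using c by (simp add: B_def)
  have "(q*B)^2 + 4*(q*B)*B = B^2 * (q^2+4*q)" by (simp add: algebra_simps power2_eq_square)
  hence s: "sqrt ((q*B)^2 + 4*(q*B)*B) = B * sqrt (q^2+4*q)"
    using B by (simp add: real_sqrt_mult)
  have a: "(q*B + sqrt ((q*B)^2 + 4*(q*B)*B))/2 = B * c" using s by (simp add: c_def algebra_simps)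
  have "tauA \<alpha> L (Suc k) = (q*B + \<alpha> * (B*c) / L, B + B*c)"
    using Suc a unfolding B_def[symmetric] by (simp only: tauA.simps Let_def split)
  also have "\<dots> = (q * (1+c)^Suc k, (1+c)^Suc k)"
    by (simp add: B_def q_def algebra_simps)
  finally show ?case .
qed

theorem lemmaD2:
  fixes \<alpha> L :: real and k :: nat
  assumes "\<alpha> > 0" and "L > 0"
  shows "A_seq \<alpha> L k / L = tau_seq \<alpha> L k / \<alpha>
    \<and> (a_seq \<alpha> L k)^2 = tau_seq \<alpha> L k * A_seq \<alpha> L (Suc k)
    \<and> (a_seq \<alpha> L k)^2 = tau_seq \<alpha> L (Suc k) * A_seq \<alpha> L k
    \<and> A_seq \<alpha> L k \<ge> (1 + sqrt \<alpha> / (2 * sqrt L)) ^ (2 * k)"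
proof -
  define q where "q = \<alpha> / L"
  define c where "c = (q + sqrt (q^2 + 4*q)) / 2"
  have q: "q > 0" using assms by (simp add: q_def)
  have c: "c \<ge> 0" using q by (simp add: c_def)
  have cl: "\<And>k. tauA \<alpha> L k = (q * (1+c)^k, (1+c)^k)"
    using closed[OF assms] unfolding q_def c_def by blast
  define B where "B = (1+c)^k"
  have B: "B > 0" using c by (simp add: B_def)
  have T: "tau_seq \<alpha> L k = q*B" "A_seq \<alpha> L k = B"
    "tau_seq \<alpha> L (Suc k) = q*B*(1+c)" "A_seq \<alpha> L (Suc k) = B*(1+c)"
    unfolding tau_seq_def A_seq_def cl B_def by (simp_all add: algebra_simps)
  have "(q*B)^2 + 4*(q*B)*B = B^2 * (q^2+4*q)" by (simp add: algebra_simps power2_eq_square)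
  hence s: "sqrt ((q*B)^2 + 4*(q*B)*B) = B * sqrt (q^2+4*q)"
    using B by (simp add: real_sqrt_mult)
  have a: "a_seq \<alpha> L k = B * c" unfolding a_seq_def T s by (simp add: c_def algebra_simps)
  have sq: "(sqrt (q^2+4*q))^2 = q^2+4*q" using q by simp
  have cc: "c^2 = q*(1+c)" unfolding c_def using sq
    by (simp add: power2_eq_square algebra_simps)
  have e1: "A_seq \<alpha> L k / L = tau_seq \<alpha> L k / \<alpha>"
    using assms by (simp add: T q_def field_simps)
  have e2: "(a_seq \<alpha> L k)^2 = tau_seq \<alpha> L k * A_seq \<alpha> L (Suc k)"
    proof -
    have "(B*c)^2 = B^2 * c^2" by (simp add: power_mult_distrib)
    also have "\<dots> = B^2 * (q*(1+c))" by (simp only: cc)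
    also have "\<dots> = (q*B) * (B*(1+c))" by (simp add: power2_eq_square)
    finally show ?thesis by (simp only: a T)
  qed
  have e3: "(a_seq \<alpha> L k)^2 = tau_seq \<alpha> L (Suc k) * A_seq \<alpha> L k"
    proof -
    have "(B*c)^2 = B^2 * c^2" by (simp add: power_mult_distrib)
    also have "\<dots> = B^2 * (q*(1+c))" by (simp only: cc)
    also have "\<dots> = (q*B*(1+c)) * B" by (simp add: power2_eq_square)
    finally show ?thesis by (simp only: a T)
  qed
  have sa: "sqrt \<alpha> / (2 * sqrt L) = sqrt q / 2"
    using assms by (simp add: q_def real_sqrt_divide)
  have sqq: "(sqrt q)^2 = q" using q by simp
  have key: "(1 + sqrt q / 2)^2 \<le> 1 + c"
  proof -
    define s where "s = sqrt q"
    define r where "r = sqrt (q^2+4*q)"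
    have s0: "s \<ge> 0" and ss: "s*s = q" using q by (simp_all add: s_def)
    have r0: "r \<ge> 0" and rr: "r*r = q^2+4*q" using q by (simp_all add: r_def)
    have "2*s - q/2 \<le> r"
    proof (cases "2*s - q/2 \<le> 0")
      case True then show ?thesis using r0 by linarith
    next
      case False
      have "(2*s - q/2)*(2*s - q/2) = 4*(s*s) - q*s*(s*s)/(s*s)*2 + q*q/4"
        using ss q by (simp add: algebra_simps)
      hence e: "(2*s - q/2)*(2*s - q/2) = 4*q - 2*q*s + q*q/4" using ss q by simp
      have "0 \<le> q*s" "0 \<le> q*q" using q s0 by simp_all
      hence "(2*s - q/2)*(2*s - q/2) \<le> r*r" unfolding e rr
        by (simp add: power2_eq_square, linarith)
      then show ?thesis using False r0 by (meson mult_mono not_le less_le_trans order_less_imp_le mult_strict_mono)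
    qed
    moreover have "(1 + s/2)^2 = 1 + s + q/4" using ss by (simp add: power2_eq_square algebra_simps)
    moreover have "c = (q + r)/2" by (simp add: c_def r_def)
    ultimately have "(1 + s/2)^2 \<le> 1 + c" by (simp add: field_simps)
    then show ?thesis by (simp only: s_def)
  qed
  have e4: "A_seq \<alpha> L k \<ge> (1 + sqrt \<alpha> / (2 * sqrt L)) ^ (2 * k)"
    unfolding sa T B_def power_mult
    by (rule power_mono[OF key]) simp
  show ?thesis using e1 e2 e3 e4 by blast
qed

end
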